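(* Consider a traffic network and user population as described in the context, and let $\boldsymbol{\tau}^*=\{\tau^*_e\}_{e\in E}$ be a vector of edge tolls that is market-clearing, i.e. there is an equilibrium (path flow $\bm{f}^*$, outside-option flow $\bm{f}^*_o$) under $\boldsymbol{\tau}^*$ whose edge flows $x^*_e=\sum_{u\in\mathcal{U}}\sum_{P\in\mathcal{P}_u:e\in P}f^*_{P,u}$ satisfy $x^*_e\le c_e$ for all $e\in E$, with $\tau^*_e=0$ for every edge with $x^*_e<c_e$ and $\tau^*_e\ge 0$ for every edge with $x^*_e=c_e$. Then $(\bm{f}^*,\bm{f}^*_o)$ is an optimal solution of the system optimization problem $$\min_{\bm{f},\bm{f}_o}\ \sum_{u\in\mathcal{U}}\Big(v_u\sum_{P\in\mathcal{P}_u}l_Pf_{P,u}+\lambda_uf_{o,u}\Big)$$ subject to $\sum_{P\in\mathcal{P}_u}f_{P,u}+f_{o,u}=1$ for all $u\in\mathcal{U}$; $f_{o,u}\in\{0,1\}$ and $f_{P,u}\in\{0,1\}$ for all $P\in\mathcal{P}_u$, $u\in\mathcal{U}$; and $\sum_{u\in\mathcal{U}}\sum_{P\in\mathcal{P}_u:e\in P}f_{P,u}\le c_e$ for all $e\in E$.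
   Context: The road network is a directed graph $G=(V,E)$; each edge $e$ has a capacity $c_e\ge 0$ and a fixed travel time $l_e\ge 0$. $\mathcal{U}$ is a finite set of users; user $u$ has an origin-destination pair $w_u$, a finite set $\mathcal{P}_u$ of paths (sequences of directed edges) from its origin to its destination, a value of time $v_u>0$, and a cost $\lambda_u$ for an outside option (not using the network). For a path $P$, $l_P=\sum_{e\in P}l_e$ and, for a toll vector $\boldsymbol{\tau}=\{\tau_e\}_{e\in E}$, $\tau_P=\sum_{e\in P}\tau_e$; the cost of path $P$ to user $u$ is $C_P(\boldsymbol{\tau})=v_ul_P+\tau_P$. An assignment consists of binary variables $f_{P,u}$ ($P\in\mathcal{P}_u$) and $f_{o,u}$ with $\sum_{P\in\mathcal{P}_u}f_{P,u}+f_{o,u}=1$ for each $u$. Given tolls $\boldsymbol{\tau}$, an assignment is an equilibrium if every user chooses a cost-minimizing option: if $f_{P,u}=1$ then $C_P(\boldsymbol{\tau})\le\min\{\min_{Q\in\mathcal{P}_u}C_Q(\boldsymbol{\tau}),\lambda_u\}$, and if $f_{o,u}=1$ then $\lambda_u\le C_P(\boldsymbol{\tau})$ for all $P\in\mathcal{P}_u$. Equilibria do not have to respect capacities. *)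

theory Defs
  imports Complex_Main
begin

text \<open>Assignment variables: fp u P (path P of user u), fo u (outside option), real-valued
  but constrained to {0,1}.\<close>

definition path_len :: "('e \<Rightarrow> real) \<Rightarrow> 'e list \<Rightarrow> real" where
  "path_len l P = sum_list (map l P)"

definition path_toll :: "('e \<Rightarrow> real) \<Rightarrow> 'e list \<Rightarrow> real" where
  "path_toll \<tau> P = sum_list (map \<tau> P)"

definition path_cost ::
  "('u \<Rightarrow> real) \<Rightarrow> ('e \<Rightarrow> real) \<Rightarrow> ('e \<Rightarrow> real) \<Rightarrow> 'u \<Rightarrow> 'e list \<Rightarrow> real" where
  "path_cost v l \<tau> u P = v u * path_len l P + path_toll \<tau> P"

definition assignment ::
  "'u set \<Rightarrow> ('u \<Rightarrow> 'e list set) \<Rightarrow> ('u \<Rightarrow> 'e list \<Rightarrow> real) \<Rightarrow> ('u \<Rightarrow> real) \<Rightarrow> bool" where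
  "assignment U Ps fp fo \<longleftrightarrow>
     (\<forall>u\<in>U. (\<forall>P\<in>Ps u. fp u P \<in> {0, 1}) \<and> fo u \<in> {0, 1} \<and>
             (\<Sum>P\<in>Ps u. fp u P) + fo u = 1)"

definition is_equilibrium ::
  "'u set \<Rightarrow> ('u \<Rightarrow> 'e list set) \<Rightarrow> ('u \<Rightarrow> real) \<Rightarrow> ('e \<Rightarrow> real) \<Rightarrow> ('u \<Rightarrow> real)
   \<Rightarrow> ('e \<Rightarrow> real) \<Rightarrow> ('u \<Rightarrow> 'e list \<Rightarrow> real) \<Rightarrow> ('u \<Rightarrow> real) \<Rightarrow> bool" where
  "is_equilibrium U Ps v l lam \<tau> fp fo \<longleftrightarrow>
     assignment U Ps fp fo \<and>
     (\<forall>u\<in>U.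
        (\<forall>P\<in>Ps u. fp u P = 1 \<longrightarrow>
            (\<forall>Q\<in>Ps u. path_cost v l \<tau> u P \<le> path_cost v l \<tau> u Q) \<and>
            path_cost v l \<tau> u P \<le> lam u) \<and>
        (fo u = 1 \<longrightarrow> (\<forall>P\<in>Ps u. lam u \<le> path_cost v l \<tau> u P)))"

definition edge_flow ::
  "'u set \<Rightarrow> ('u \<Rightarrow> 'e list set) \<Rightarrow> ('u \<Rightarrow> 'e list \<Rightarrow> real) \<Rightarrow> 'e \<Rightarrow> real" where
  "edge_flow U Ps fp e = (\<Sum>u\<in>U. \<Sum>P\<in>{P\<in>Ps u. e \<in> set P}. fp u P)"

definition system_cost ::
  "'u set \<Rightarrow> ('u \<Rightarrow> 'e list set) \<Rightarrow> ('u \<Rightarrow> real) \<Rightarrow> ('e \<Rightarrow> real) \<Rightarrow> ('u \<Rightarrow> real)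
   \<Rightarrow> ('u \<Rightarrow> 'e list \<Rightarrow> real) \<Rightarrow> ('u \<Rightarrow> real) \<Rightarrow> real" where
  "system_cost U Ps v l lam fp fo =
     (\<Sum>u\<in>U. v u * (\<Sum>P\<in>Ps u. path_len l P * fp u P) + lam u * fo u)"

definition so_feasible ::
  "'e set \<Rightarrow> ('e \<Rightarrow> real) \<Rightarrow> 'u set \<Rightarrow> ('u \<Rightarrow> 'e list set)
   \<Rightarrow> ('u \<Rightarrow> 'e list \<Rightarrow> real) \<Rightarrow> ('u \<Rightarrow> real) \<Rightarrow> bool" where
  "so_feasible E c U Ps fp fo \<longleftrightarrow>
     assignment U Ps fp fo \<and> (\<forall>e\<in>E. edge_flow U Ps fp e \<le> c e)"

definition so_optimal ::
  "'e set \<Rightarrow> ('e \<Rightarrow> real) \<Rightarrow> 'u set \<Rightarrow> ('u \<Rightarrow> 'e list set) \<Rightarrow> ('u \<Rightarrow> real)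
   \<Rightarrow> ('e \<Rightarrow> real) \<Rightarrow> ('u \<Rightarrow> real) \<Rightarrow> ('u \<Rightarrow> 'e list \<Rightarrow> real) \<Rightarrow> ('u \<Rightarrow> real) \<Rightarrow> bool" where
  "so_optimal E c U Ps v l lam fp fo \<longleftrightarrow>
     so_feasible E c U Ps fp fo \<and>
     (\<forall>g go. so_feasible E c U Ps g go \<longrightarrow>
        system_cost U Ps v l lam fp fo \<le> system_cost U Ps v l lam g go)"

end

theory Submission
  imports Defs
begin

lemma toll_swap:
  fixes E :: "'e set" and U :: "'u set" and Ps :: "'u \<Rightarrow> 'e list set"
    and \<tau> :: "'e \<Rightarrow> real" and g :: "'u \<Rightarrow> 'e list \<Rightarrow> real"
  assumes finE: "finite E" and finU: "finite U"
    and finP: "\<forall>u\<in>U. finite (Ps u)"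
    and paths: "\<forall>u\<in>U. \<forall>P\<in>Ps u. set P \<subseteq> E \<and> distinct P"
  shows "(\<Sum>u\<in>U. \<Sum>P\<in>Ps u. path_toll \<tau> P * g u P) = (\<Sum>e\<in>E. \<tau> e * edge_flow U Ps g e)"
proof -
  have pt: "path_toll \<tau> P = (\<Sum>e\<in>E. if e \<in> set P then \<tau> e else 0)" if "u \<in> U" "P \<in> Ps u" for u P
  proof -
    have "path_toll \<tau> P = sum \<tau> (set P)"
      using paths that by (simp add: path_toll_def sum_list_distinct_conv_sum_set)
    also have "set P = E \<inter> set P" using paths that by blast
    also have "sum \<tau> (E \<inter> set P) = (\<Sum>e\<in>E. if e \<in> set P then \<tau> e else 0)"
      using finE by (rule sum.inter_restrict)
    finally show ?thesis .
  qed
  have "(\<Sum>u\<in>U. \<Sum>P\<in>Ps u. path_toll \<tau> P * g u P)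
      = (\<Sum>u\<in>U. \<Sum>P\<in>Ps u. \<Sum>e\<in>E. (if e \<in> set P then \<tau> e * g u P else 0))"
    by (rule sum.cong, simp, rule sum.cong, simp)
       (auto simp: pt sum_distrib_right intro!: sum.cong)
  also have "\<dots> = (\<Sum>u\<in>U. \<Sum>e\<in>E. \<Sum>P\<in>Ps u. (if e \<in> set P then \<tau> e * g u P else 0))"
    by (rule sum.cong, simp, rule sum.swap)
  also have "\<dots> = (\<Sum>e\<in>E. \<Sum>u\<in>U. \<Sum>P\<in>Ps u. (if e \<in> set P then \<tau> e * g u P else 0))"
    by (rule sum.swap)
  also have "\<dots> = (\<Sum>e\<in>E. \<tau> e * edge_flow U Ps g e)"
    unfolding edge_flow_def sum_distrib_left
    by (rule sum.cong, simp, rule sum.cong, simp)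
       (simp add: finP sum.inter_filter sum_distrib_left if_distrib cong: if_cong)
  finally show ?thesis .
qed

lemma lower_bound:
  fixes C :: "'p \<Rightarrow> real"
  assumes "finite S" "\<forall>P\<in>S. m \<le> C P" "m \<le> lam" "\<forall>P\<in>S. g P \<ge> 0" "go \<ge> 0"
    "(\<Sum>P\<in>S. g P) + go = 1"
  shows "m \<le> (\<Sum>P\<in>S. C P * g P) + lam * go"
proof -
  have "m = (\<Sum>P\<in>S. m * g P) + m * go"
    using assms(6) by (metis distrib_left mult.right_neutral sum_distrib_left)
  also have "\<dots> \<le> (\<Sum>P\<in>S. C P * g P) + lam * go"
    using assms by (intro add_mono sum_mono mult_right_mono) auto
  finally show ?thesis .
qed

theorem theorem1:
  fixes E :: "'e set" and c l \<tau> :: "'e \<Rightarrow> real"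
    and U :: "'u set" and Ps :: "'u \<Rightarrow> 'e list set"
    and v lam :: "'u \<Rightarrow> real"
    and fp :: "'u \<Rightarrow> 'e list \<Rightarrow> real" and fo :: "'u \<Rightarrow> real"
  assumes finE: "finite E" and finU: "finite U"
    and finP: "\<forall>u\<in>U. finite (Ps u)"
    and paths: "\<forall>u\<in>U. \<forall>P\<in>Ps u. set P \<subseteq> E \<and> distinct P"
    and cap: "\<forall>e\<in>E. c e \<ge> 0" and len: "\<forall>e\<in>E. l e \<ge> 0"
    and vot: "\<forall>u\<in>U. v u > 0"
    and eq: "is_equilibrium U Ps v l lam \<tau> fp fo"
    and feas: "\<forall>e\<in>E. edge_flow U Ps fp e \<le> c e"
    and slack: "\<forall>e\<in>E. edge_flow U Ps fp e < c e \<longrightarrow> \<tau> e = 0"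
    and tight: "\<forall>e\<in>E. edge_flow U Ps fp e = c e \<longrightarrow> \<tau> e \<ge> 0"
  shows "so_optimal E c U Ps v l lam fp fo"
proof -
  have asg: "assignment U Ps fp fo" using eq by (simp add: is_equilibrium_def)
  have taupos: "\<forall>e\<in>E. \<tau> e \<ge> 0"
    using feas slack tight by (metis order.order_iff_strict order_refl)
  define TC where "TC g go = (\<Sum>u\<in>U. (\<Sum>P\<in>Ps u. path_cost v l \<tau> u P * g u P) + lam u * go u)"
    for g :: "'u \<Rightarrow> 'e list \<Rightarrow> real" and go :: "'u \<Rightarrow> real"
  have TCsplit: "TC g go = system_cost U Ps v l lam g go + (\<Sum>e\<in>E. \<tau> e * edge_flow U Ps g e)" for g go
  proof -
    have "TC g go = system_cost U Ps v l lam g go + (\<Sum>u\<in>U. \<Sum>P\<in>Ps u. path_toll \<tau> P * g u P)"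
      unfolding TC_def system_cost_def path_cost_def
      by (simp add: distrib_right sum_distrib_left mult.assoc sum.distrib[symmetric])
         (simp add: sum.distrib)
    then show ?thesis using toll_swap[OF finE finU finP paths] by simp
  qed
  have user: "(\<Sum>P\<in>Ps u. path_cost v l \<tau> u P * fp u P) + lam u * fo u
      \<le> (\<Sum>P\<in>Ps u. path_cost v l \<tau> u P * g u P) + lam u * go u"
    if u: "u \<in> U" and ga: "assignment U Ps g go" for u g go
  proof -
    have gnn: "\<forall>P\<in>Ps u. g u P \<ge> 0" "go u \<ge> 0" "(\<Sum>P\<in>Ps u. g u P) + go u = 1"
      using ga u unfolding assignment_def by fastforce+
    have fb: "\<forall>P\<in>Ps u. fp u P \<in> {0,1}" "fo u \<in> {0,1}" "(\<Sum>P\<in>Ps u. fp u P) + fo u = 1"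
      using asg u unfolding assignment_def by auto
    have fnn: "\<forall>P\<in>Ps u. fp u P \<ge> 0" using fb(1) by auto
    have eqc: "\<forall>P\<in>Ps u. fp u P = 1 \<longrightarrow>
            (\<forall>Q\<in>Ps u. path_cost v l \<tau> u P \<le> path_cost v l \<tau> u Q) \<and> path_cost v l \<tau> u P \<le> lam u"
      "fo u = 1 \<longrightarrow> (\<forall>P\<in>Ps u. lam u \<le> path_cost v l \<tau> u P)"
      using eq u unfolding is_equilibrium_def by auto
    have finu: "finite (Ps u)" using finP u by auto
    show ?thesis
    proof (cases "fo u = 1")
      case True
      then have "(\<Sum>P\<in>Ps u. fp u P) = 0" using fb by simp
      then have z: "\<forall>P\<in>Ps u. fp u P = 0" using sum_nonneg_eq_0_iff[OF finu] fnn by blast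
      have "lam u \<le> (\<Sum>P\<in>Ps u. path_cost v l \<tau> u P * g u P) + lam u * go u"
        by (rule lower_bound[OF finu]) (use eqc True gnn in auto)
      then show ?thesis using z True by simp
    next
      case False
      then have fo0: "fo u = 0" using fb by auto
      then have s1: "(\<Sum>P\<in>Ps u. fp u P) = 1" using fb by simp
      then obtain P0 where P0: "P0 \<in> Ps u" "fp u P0 \<noteq> 0"
        by (metis sum.neutral zero_neq_one)
      then have f1: "fp u P0 = 1" using fb by auto
      have "(\<Sum>P\<in>Ps u - {P0}. fp u P) = 0"
        using s1 sum.remove[OF finu P0(1), of "fp u"] f1 by simp
      then have z: "\<forall>P\<in>Ps u - {P0}. fp u P = 0"
        using sum_nonneg_eq_0_iff[of "Ps u - {P0}"] finu fnn by blast
      have "(\<Sum>P\<in>Ps u. path_cost v l \<tau> u P * fp u P) = path_cost v l \<tau> u P0"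
        using sum.remove[OF finu P0(1), of "\<lambda>P. path_cost v l \<tau> u P * fp u P"] f1 z by simp
      moreover have "path_cost v l \<tau> u P0 \<le> (\<Sum>P\<in>Ps u. path_cost v l \<tau> u P * g u P) + lam u * go u"
        by (rule lower_bound[OF finu]) (use eqc P0(1) f1 gnn in auto)
      ultimately show ?thesis using fo0 by simp
    qed
  qed
  have fflow: "(\<Sum>e\<in>E. \<tau> e * edge_flow U Ps fp e) = (\<Sum>e\<in>E. \<tau> e * c e)"
    by (rule sum.cong, simp) (metis feas slack order.order_iff_strict mult_zero_left)
  show ?thesis
    unfolding so_optimal_def so_feasible_def
  proof (intro conjI allI impI)
    show "assignment U Ps fp fo" by (rule asg)
    show "\<forall>e\<in>E. edge_flow U Ps fp e \<le> c e" by (rule feas)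
    fix g go assume gf: "assignment U Ps g go \<and> (\<forall>e\<in>E. edge_flow U Ps g e \<le> c e)"
    have "TC fp fo \<le> TC g go" unfolding TC_def
      using user gf by (intro sum_mono) auto
    moreover have "(\<Sum>e\<in>E. \<tau> e * edge_flow U Ps g e) \<le> (\<Sum>e\<in>E. \<tau> e * c e)"
      using gf taupos by (intro sum_mono mult_left_mono) auto
    ultimately show "system_cost U Ps v l lam fp fo \<le> system_cost U Ps v l lam g go"
      using TCsplit[of fp fo] TCsplit[of g go] fflow by linarith
  qed
qed

end
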